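(* Assume the standing hypotheses (H). Then $\frac{n+k-1}{3}$ is an integer.
   Context: A list assignment $L$ assigns to each vertex $v$ a set $L(v)$ of colors; an $L$-coloring is a proper coloring $f$ with $f(v)\in L(v)$ for all $v$; $\mathrm{ch}$ denotes choice number and $\chi$ chromatic number. A part of a complete multipartite graph is one of its maximal stable sets. Standing hypotheses (H): $k\ge1$ and $n\ge 2k+2$ are integers; $G$ is a complete $k$-partite graph (exactly $k$ nonempty parts) on $n$ vertices; $L$ is a list assignment for $G$ with $|L(v)|\ge\lceil (n+k-1)/3\rceil$ for every vertex $v$; $G$ has no $L$-coloring; $\left|\bigcup_{v\in V(G)}L(v)\right|\le n-1$; and every graph $H$ with fewer than $n$ vertices satisfies $\mathrm{ch}(H)\le\max\{\chi(H),\lceil(|V(H)|+\chi(H)-1)/3\rceil\}$. *)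

theory Defs
  imports Complex_Main "HOL-Library.Disjoint_Sets"
begin

definition simple_graph :: "'a set \<Rightarrow> ('a \<Rightarrow> 'a \<Rightarrow> bool) \<Rightarrow> bool" where
  "simple_graph V E \<longleftrightarrow> finite V \<and> (\<forall>u v. E u v \<longrightarrow> u \<in> V \<and> v \<in> V \<and> u \<noteq> v \<and> E v u)"

definition proper_coloring :: "'a set \<Rightarrow> ('a \<Rightarrow> 'a \<Rightarrow> bool) \<Rightarrow> ('a \<Rightarrow> 'c) \<Rightarrow> bool" where
  "proper_coloring V E f \<longleftrightarrow> (\<forall>u\<in>V. \<forall>v\<in>V. E u v \<longrightarrow> f u \<noteq> f v)"

definition L_coloring :: "'a set \<Rightarrow> ('a \<Rightarrow> 'a \<Rightarrow> bool) \<Rightarrow> ('a \<Rightarrow> 'c set) \<Rightarrow> ('a \<Rightarrow> 'c) \<Rightarrow> bool" where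
  "L_coloring V E L f \<longleftrightarrow> proper_coloring V E f \<and> (\<forall>v\<in>V. f v \<in> L v)"

definition chromatic_number :: "'a set \<Rightarrow> ('a \<Rightarrow> 'a \<Rightarrow> bool) \<Rightarrow> nat" where
  "chromatic_number V E = (LEAST m. \<exists>f :: 'a \<Rightarrow> nat. proper_coloring V E f \<and> f ` V \<subseteq> {..<m})"

definition choosable :: "'a set \<Rightarrow> ('a \<Rightarrow> 'a \<Rightarrow> bool) \<Rightarrow> nat \<Rightarrow> bool" where
  "choosable V E m \<longleftrightarrow> (\<forall>L :: 'a \<Rightarrow> nat set. (\<forall>v\<in>V. m \<le> card (L v)) \<longrightarrow> (\<exists>f. L_coloring V E L f))"

definition choice_number :: "'a set \<Rightarrow> ('a \<Rightarrow> 'a \<Rightarrow> bool) \<Rightarrow> nat" where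
  "choice_number V E = (LEAST m. choosable V E m)"

definition complete_multipartite :: "'a set \<Rightarrow> ('a \<Rightarrow> 'a \<Rightarrow> bool) \<Rightarrow> 'a set set \<Rightarrow> bool" where
  "complete_multipartite V E P \<longleftrightarrow> simple_graph V E \<and> partition_on V P \<and>
     (\<forall>u\<in>V. \<forall>v\<in>V. E u v \<longleftrightarrow> \<not> (\<exists>X\<in>P. u \<in> X \<and> v \<in> X))"

definition complete_k_partite :: "nat \<Rightarrow> 'a set \<Rightarrow> ('a \<Rightarrow> 'a \<Rightarrow> bool) \<Rightarrow> bool" where
  "complete_k_partite k V E \<longleftrightarrow> (\<exists>P. complete_multipartite V E P \<and> card P = k)"

end

theory Submission
  imports Defs
begin

lemma greedy_inj:
  assumes "finite W"
  shows "(\<forall>v\<in>W. card W \<le> card (L v)) \<Longrightarrow> \<exists>f. inj_on f W \<and> (\<forall>v\<in>W. f v \<in> L v)"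
  using assms
proof (induction W rule: finite_induct)
  case empty
  then show ?case by auto
next
  case (insert x W)
  have "\<forall>v\<in>W. card W \<le> card (L v)" using insert by auto
  then obtain f where f: "inj_on f W" "\<forall>v\<in>W. f v \<in> L v" using insert by blast
  have lt: "card (f ` W) < card (L x)"
    using insert card_image_le[of W f] by auto
  have "\<not> L x \<subseteq> f ` W"
  proof
    assume "L x \<subseteq> f ` W"
    then have "card (L x) \<le> card (f ` W)" using insert by (simp add: card_mono)
    then show False using lt by simp
  qed
  then obtain c where c: "c \<in> L x" "c \<notin> f ` W" by blast
  have "inj_on (f(x:=c)) (insert x W)"
    using f(1) c(2) insert(2) by (auto simp: inj_on_def)
  moreover have "\<forall>v\<in>insert x W. (f(x:=c)) v \<in> L v" using f c by auto
  ultimately show ?case by blast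
qed

lemma choosable_card:
  assumes "simple_graph W F" shows "choosable W F (card W)"
  unfolding choosable_def
proof (intro allI impI)
  fix L :: "_ \<Rightarrow> nat set"
  assume "\<forall>v\<in>W. card W \<le> card (L v)"
  then obtain f where f: "inj_on f W" "\<forall>v\<in>W. f v \<in> L v"
    using greedy_inj[of W L] assms by (auto simp: simple_graph_def)
  have "proper_coloring W F f"
    unfolding proper_coloring_def using f(1) assms
    by (auto simp: simple_graph_def inj_on_def)
  then show "\<exists>f. L_coloring W F L f" using f by (auto simp: L_coloring_def)
qed

lemma choosable_mono:
  assumes "choosable W F a" "a \<le> b" shows "choosable W F b"
  unfolding choosable_def
proof (intro allI impI)
  fix L :: "_ \<Rightarrow> nat set"
  assume L: "\<forall>v\<in>W. b \<le> card (L v)"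
  define L' where "L' v = (SOME T. T \<subseteq> L v \<and> card T = a)" for v
  have L': "L' v \<subseteq> L v \<and> card (L' v) = a" if "v \<in> W" for v
  proof -
    have "a \<le> card (L v)" using L that assms(2) by auto
    then obtain T where "T \<subseteq> L v" "card T = a" by (meson obtain_subset_with_card_n)
    then show ?thesis unfolding L'_def by (metis (mono_tags, lifting) someI)
  qed
  then obtain f where "L_coloring W F L' f"
    using assms(1) unfolding choosable_def by (metis order_refl)
  then show "\<exists>f. L_coloring W F L f" using L' unfolding L_coloring_def by blast
qed

lemma choosable_of_le:
  assumes "simple_graph W F" "choice_number W F \<le> q" shows "choosable W F q"
proof -
  have "choosable W F (choice_number W F)"
    unfolding choice_number_def by (rule LeastI[of _ "card W"]) (rule choosable_card[OF assms(1)])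
  then show ?thesis using choosable_mono assms(2) by blast
qed

lemma chrom_le:
  assumes "proper_coloring W F (g :: _ \<Rightarrow> nat)" "g ` W \<subseteq> {..<k}"
  shows "chromatic_number W F \<le> k"
  unfolding chromatic_number_def by (rule Least_le) (use assms in blast)

lemma transfer:
  fixes V' :: "'a set" and E :: "'a \<Rightarrow> 'a \<Rightarrow> bool" and L' :: "'a \<Rightarrow> 'c set"
    and g :: "'a \<Rightarrow> nat"
  assumes fin: "finite V'" and sym: "\<forall>u\<in>V'. \<forall>v\<in>V'. E u v \<longrightarrow> E v u \<and> u \<noteq> v"
    and g: "proper_coloring V' E g" "g ` V' \<subseteq> {..<k}"
    and Lq: "\<forall>v\<in>V'. q \<le> card (L' v)" and Lfin: "\<forall>v\<in>V'. finite (L' v)"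
    and kq: "k \<le> q" and bnd: "nat \<lceil>(real (card V') + real k - 1) / 3\<rceil> \<le> q"
    and cn: "card V' < n"
    and hyp: "\<forall>(W :: nat set) F. simple_graph W F \<and> card W < n \<longrightarrow>
           choice_number W F \<le> max (chromatic_number W F)
             (nat \<lceil>(real (card W) + real (chromatic_number W F) - 1) / 3\<rceil>)"
  shows "\<exists>f. L_coloring V' E L' f"
proof -
  obtain h where h: "bij_betw h V' {0..<card V'}" using ex_bij_betw_finite_nat[OF fin] by blast
  have hinj: "inj_on h V'" using h by (simp add: bij_betw_def)
  define W where "W = h ` V'"
  have W: "W = {0..<card V'}" using h by (simp add: bij_betw_def W_def)
  define F where "F a b = (\<exists>u\<in>V'. \<exists>v\<in>V'. a = h u \<and> b = h v \<and> E u v)" for a b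
  have sg: "simple_graph W F"
    unfolding simple_graph_def F_def W_def using fin sym hinj
    by (auto simp: inj_on_def)
  define hi where "hi = the_inv_into V' h"
  have hi: "hi (h u) = u" if "u \<in> V'" for u
    using the_inv_into_f_f[OF hinj that] hi_def by simp
  have pc: "proper_coloring W F (g \<circ> hi)"
    using g(1) hinj unfolding proper_coloring_def F_def W_def by (auto simp: hi inj_on_def) metis
  have "(g \<circ> hi) ` W \<subseteq> {..<k}" using g(2) by (auto simp: W_def hi)
  then have chi: "chromatic_number W F \<le> k" using chrom_le pc by blast
  have cW: "card W = card V'" using W by simp
  have "choice_number W F \<le> max (chromatic_number W F)
             (nat \<lceil>(real (card W) + real (chromatic_number W F) - 1) / 3\<rceil>)"
    using hyp sg cW cn by (metis (no_types, lifting))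
  also have "\<dots> \<le> q"
  proof -
    have "nat \<lceil>(real (card W) + real (chromatic_number W F) - 1) / 3\<rceil>
          \<le> nat \<lceil>(real (card V') + real k - 1) / 3\<rceil>"
      using chi cW by (intro nat_mono ceiling_mono) (simp add: divide_right_mono)
    then show ?thesis using bnd kq chi by (meson max.boundedI order_trans)
  qed
  finally have ch: "choosable W F q" using choosable_of_le sg by blast
  define C where "C = (\<Union>v\<in>V'. L' v)"
  have Cfin: "finite C" using fin Lfin C_def by auto
  obtain c where c: "bij_betw c C {0..<card C}" using ex_bij_betw_finite_nat[OF Cfin] by blast
  have cinj: "inj_on c C" using c by (simp add: bij_betw_def)
  define LN where "LN a = c ` L' (hi a)" for a
  have "\<forall>a\<in>W. q \<le> card (LN a)"
  proof
    fix a assume "a \<in> W"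
    then obtain u where u: "u \<in> V'" "a = h u" by (auto simp: W_def)
    have "inj_on c (L' u)" using cinj u C_def by (meson UN_I inj_on_subset subsetI)
    then have "card (LN a) = card (L' u)" using u hi by (simp add: LN_def card_image)
    then show "q \<le> card (LN a)" using Lq u by simp
  qed
  then obtain f where f: "L_coloring W F LN f" using ch unfolding choosable_def by blast
  define ci where "ci = the_inv_into C c"
  define f' where "f' u = ci (f (h u))" for u
  have inL: "f' u \<in> L' u \<and> c (f' u) = f (h u)" if "u \<in> V'" for u
  proof -
    have "f (h u) \<in> LN (h u)" using f that by (auto simp: L_coloring_def W_def)
    then obtain x where x: "x \<in> L' u" "f (h u) = c x" using hi[OF \<open>u \<in> V'\<close>] by (auto simp: LN_def)
    have "x \<in> C" using x that C_def by auto
    then have "ci (c x) = x" using the_inv_into_f_f[OF cinj] ci_def by simp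
    then show ?thesis using x f'_def by simp
  qed
  have "proper_coloring V' E f'"
    unfolding proper_coloring_def
  proof (intro ballI impI)
    fix u v assume uv: "u \<in> V'" "v \<in> V'" "E u v"
    have "F (h u) (h v)" using uv F_def by blast
    moreover have "h u \<in> W" "h v \<in> W" using uv W_def by auto
    ultimately have "f (h u) \<noteq> f (h v)" using f by (auto simp: L_coloring_def proper_coloring_def)
    then show "f' u \<noteq> f' v" using inL uv by metis
  qed
  then show ?thesis using inL unfolding L_coloring_def by blast
qed

lemma ceil3: assumes "\<not> 3 dvd (N::nat)" shows "nat \<lceil>real N / 3\<rceil> = N div 3 + 1"
proof -
  define q where "q = N div 3"
  define r where "r = N mod 3"
  have r: "r = 1 \<or> r = 2" using assms r_def by presburger
  have "N = 3 * q + r" unfolding q_def r_def by simp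
  then have e: "real N / 3 = real q + real r / 3" by simp
  have "\<lceil>real N / 3\<rceil> = int q + 1"
  proof (rule ceiling_unique)
    show "real_of_int (int q + 1) - 1 < real N / 3" using e r by auto
    show "real N / 3 \<le> real_of_int (int q + 1)" using e r by auto
  qed
  then show ?thesis using q_def by simp
qed

lemma ceil3': "nat \<lceil>real (3*q) / 3\<rceil> = q"
proof -
  have "real (3*q) / 3 = real q" by simp
  then show ?thesis by simp
qed

theorem lemma14:
  fixes V :: "'a set" and E :: "'a \<Rightarrow> 'a \<Rightarrow> bool" and L :: "'a \<Rightarrow> 'c set"
    and n k :: nat
  assumes "k \<ge> 1" and "n \<ge> 2 * k + 2"
    and "complete_k_partite k V E" and "card V = n"
    and "\<forall>v\<in>V. nat \<lceil>(real n + real k - 1) / 3\<rceil> \<le> card (L v)"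
    and "\<not> (\<exists>f. L_coloring V E L f)"
    and "card (\<Union>v\<in>V. L v) \<le> n - 1"
    and "\<forall>(W :: nat set) F. simple_graph W F \<and> card W < n \<longrightarrow>
           choice_number W F \<le> max (chromatic_number W F)
             (nat \<lceil>(real (card W) + real (chromatic_number W F) - 1) / 3\<rceil>)"
  shows "3 dvd (n + k - 1)"
proof (rule ccontr)
  assume nd: "\<not> 3 dvd (n + k - 1)"
  define N where "N = n + k - 1"
  define q where "q = N div 3"
  define m where "m = nat \<lceil>(real n + real k - 1) / 3\<rceil>"
  have rN: "real n + real k - 1 = real N" using assms(2) N_def by auto
  have "m = nat \<lceil>real N / 3\<rceil>" unfolding m_def rN by (rule refl)
  also have "\<dots> = N div 3 + 1" using ceil3 nd N_def by blast
  finally have mq: "m = q + 1" unfolding q_def .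
  have N3: "3 * k + 1 \<le> N" using assms(2) N_def by simp
  have kq: "k \<le> q" unfolding q_def using N3 by linarith
  obtain P where P: "complete_multipartite V E P" "card P = k"
    using assms(3) complete_k_partite_def by blast
  note cm = P(1)[unfolded complete_multipartite_def]
  have sg: "simple_graph V E" by (rule conjunct1[OF cm])
  have part: "partition_on V P" by (rule conjunct1[OF conjunct2[OF cm]])
  have adj: "\<forall>u\<in>V. \<forall>v\<in>V. E u v \<longleftrightarrow> \<not> (\<exists>X\<in>P. u \<in> X \<and> v \<in> X)"
    by (rule conjunct2[OF conjunct2[OF cm]])
  have finV: "finite V" using sg by (simp add: simple_graph_def)
  have finP: "finite P" by (rule card_ge_0_finite) (use P(2) assms(1) in simp)
  have UP: "\<Union>P = V" using part unfolding partition_on_def by blast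
  obtain p where p: "bij_betw p {0..<k} P" using ex_bij_betw_nat_finite[OF finP] unfolding P(2) by blast
  define g where "g v = (SOME i. i < k \<and> v \<in> p i)" for v
  have gp: "g v < k \<and> v \<in> p (g v)" if "v \<in> V" for v
  proof -
    obtain X where "X \<in> P" "v \<in> X" using UP \<open>v \<in> V\<close> by blast
    then obtain i where "i < k" "p i = X" using p by (auto simp: bij_betw_def)
    then have "\<exists>i. i < k \<and> v \<in> p i" using \<open>v \<in> X\<close> by blast
    then show ?thesis unfolding g_def by (rule someI_ex)
  qed
  have gprop: "g u \<noteq> g v" if "u \<in> V" "v \<in> V" "E u v" for u v
  proof
    assume "g u = g v"
    have "u \<in> p (g u)" using gp[OF that(1)] by blast
    moreover have "v \<in> p (g u)" using gp[OF that(2)] \<open>g u = g v\<close> by simp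
    moreover have "p (g u) \<in> P" using gp[OF that(1)] p by (auto simp: bij_betw_def)
    ultimately show False using adj that by blast
  qed
  have Lv: "finite (L v) \<and> m \<le> card (L v)" if "v \<in> V" for v
    using assms(5) that m_def mq by (metis card_ge_0_finite add_gr_0 less_le_trans zero_less_one)
  have rem: False if S: "S \<subseteq> X" "X \<in> P" "S \<noteq> {}" "\<forall>v\<in>S. c \<in> L v"
    and b: "nat \<lceil>(real (card (V - S)) + real k - 1)/3\<rceil> \<le> q" for S X c
  proof -
    have SV: "S \<subseteq> V" using S UP by blast
    have finS: "finite S" using SV finV finite_subset by blast
    have "card S > 0" using finS S(3) by (simp add: card_gt_0_iff)
    moreover have "card (V - S) = card V - card S" using finS SV by (rule card_Diff_subset)
    moreover have "card S \<le> card V" using SV finV by (rule card_mono[rotated])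
    ultimately have cV: "card (V - S) < n" using assms(4) by linarith
    have "\<exists>f. L_coloring (V - S) E (\<lambda>v. L v - {c}) f"
    proof (rule transfer[where g=g and k=k and q=q and n=n])
      show "finite (V - S)" using finV by simp
      show "\<forall>u\<in>V - S. \<forall>v\<in>V - S. E u v \<longrightarrow> E v u \<and> u \<noteq> v" using sg simple_graph_def by metis
      show "proper_coloring (V - S) E g" using gprop unfolding proper_coloring_def by blast
      show "g ` (V - S) \<subseteq> {..<k}" using gp by auto
      show "\<forall>v\<in>V - S. q \<le> card (L v - {c})"
      proof
        fix v assume "v \<in> V - S"
        then have "m \<le> card (L v)" using Lv by blast
        moreover have "card (L v) - card {c} \<le> card (L v - {c})" by (rule diff_card_le_card_Diff) simp
        ultimately show "q \<le> card (L v - {c})" using mq by simp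
      qed
      show "\<forall>v\<in>V - S. finite (L v - {c})" using Lv by blast
      show "k \<le> q" by (rule kq)
      show "nat \<lceil>(real (card (V - S)) + real k - 1) / 3\<rceil> \<le> q" by (rule b)
      show "card (V - S) < n" by (rule cV)
      show "\<forall>(W :: nat set) F. simple_graph W F \<and> card W < n \<longrightarrow>
           choice_number W F \<le> max (chromatic_number W F)
             (nat \<lceil>(real (card W) + real (chromatic_number W F) - 1) / 3\<rceil>)" by (rule assms(8))
    qed
    then obtain f where f: "L_coloring (V - S) E (\<lambda>v. L v - {c}) f" by blast
    define f' where "f' v = (if v \<in> S then c else f v)" for v
    have "L_coloring V E L f'"
      unfolding L_coloring_def proper_coloring_def
    proof (intro conjI ballI impI)
      fix v assume "v \<in> V" then show "f' v \<in> L v"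
        using f S(4) by (auto simp: f'_def L_coloring_def)
    next
      fix u v assume uv: "u \<in> V" "v \<in> V" "E u v"
      have "\<not> (u \<in> S \<and> v \<in> S)" using uv adj S by blast
      moreover have "f u \<noteq> c" if "u \<in> V - S" for u using f that by (auto simp: L_coloring_def)
      moreover have "f u \<noteq> f v" if "u \<in> V - S" "v \<in> V - S"
        using f that uv by (auto simp: L_coloring_def proper_coloring_def)
      ultimately show "f' u \<noteq> f' v" using uv unfolding f'_def by (metis DiffI)
    qed
    then show False using assms(6) by blast
  qed
  have ndN: "\<not> 3 dvd N" using nd unfolding N_def .
  have "N mod 3 = 1 \<or> N mod 3 = 2" using ndN by presburger
  then show False
  proof
    assume N1: "N mod 3 = 1"
    have "V \<noteq> {}" using assms(2,4) by auto
    then obtain v where v: "v \<in> V" by blast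
    then obtain X where X: "X \<in> P" "v \<in> X" using UP by blast
    have "L v \<noteq> {}" using Lv[OF v] mq by auto
    then obtain c where c: "c \<in> L v" by blast
    have "card (V - {v}) + k = 3 * q + 1"
    proof -
      have "N = 3 * q + 1" using N1 q_def by presburger
      moreover have "card (V - {v}) = n - 1" using v finV assms(4) by (simp add: card_Diff_singleton)
      ultimately show ?thesis using N_def assms(2) by linarith
    qed
    then have "real (card (V - {v})) + real k - 1 = real (3 * q)" by (metis of_nat_add of_nat_1 add_diff_cancel_right')
    then have "nat \<lceil>(real (card (V - {v})) + real k - 1)/3\<rceil> \<le> q" using ceil3'[of q] by simp
    then show False using rem[of "{v}" X c] X c by auto
  next
    assume N2: "N mod 3 = 2"
    have "\<exists>X\<in>P. 3 \<le> card X"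
    proof (rule ccontr)
      assume "\<not> ?thesis"
      then have "\<forall>X\<in>P. card X \<le> 2" by auto
      then have "sum card P \<le> card P * 2" using sum_bounded_above[of P card 2] by simp
      moreover have "card (\<Union>P) \<le> sum card P" by (rule card_Union_le_sum_card)
      ultimately show False using UP assms(2,4) P(2) by simp
    qed
    then obtain X where X: "X \<in> P" "3 \<le> card X" by blast
    obtain T where T: "T \<subseteq> X" "card T = 3" using obtain_subset_with_card_n[OF X(2)] by blast
    then obtain a b d where abd: "T = {a,b,d}" "a \<noteq> b" "b \<noteq> d" "a \<noteq> d" by (auto simp: card_3_iff)
    have XV: "X \<subseteq> V" using X UP by blast
    have inV: "a \<in> V" "b \<in> V" "d \<in> V" using abd T XV by auto
    have "\<exists>x y. x \<in> X \<and> y \<in> X \<and> x \<noteq> y \<and> L x \<inter> L y \<noteq> {}"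
    proof (rule ccontr)
      assume "\<not> ?thesis"
      then have dis: "L a \<inter> L b = {}" "L a \<inter> L d = {}" "L b \<inter> L d = {}"
        using abd T by auto
      have fin: "finite (L a)" "finite (L b)" "finite (L d)" using Lv inV by auto
      have "card (L a \<union> L b \<union> L d) = card (L a) + card (L b) + card (L d)"
        using dis fin by (simp add: card_Un_disjoint Int_Un_distrib2)
      moreover have "m \<le> card (L a)" "m \<le> card (L b)" "m \<le> card (L d)" using Lv inV by auto
      moreover have "card (L a \<union> L b \<union> L d) \<le> card (\<Union>v\<in>V. L v)"
        by (rule card_mono) (use finV Lv inV in auto)
      moreover have "N = 3 * q + 2" using N2 q_def by presburger
      ultimately show False using assms(7) mq N_def assms(2) by linarith
    qed
    then obtain x y c where xy: "x \<in> X" "y \<in> X" "x \<noteq> y" "c \<in> L x" "c \<in> L y" by blast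
    have xyV: "x \<in> V" "y \<in> V" using xy XV by auto
    have "card (V - {x,y}) + k = 3 * q + 1"
    proof -
      have "card (V - {x,y}) = card V - 2"
        using xyV xy(3) finV by (subst card_Diff_subset) auto
      moreover have "N = 3 * q + 2" using N2 q_def by presburger
      ultimately show ?thesis using assms(2,4) N_def by linarith
    qed
    then have "real (card (V - {x,y})) + real k - 1 = real (3 * q)"
      by (metis of_nat_add of_nat_1 add_diff_cancel_right')
    then have "nat \<lceil>(real (card (V - {x,y})) + real k - 1)/3\<rceil> \<le> q" using ceil3'[of q] by simp
    then show False using rem[of "{x,y}" X c] X xy by auto
  qed
qed

end
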